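(* For every prime power $q>2$ there is no linear $(q-1,q+1,q)$-AONT, i.e. no invertible $(q+1)\times(q+1)$ matrix over $\mathbb{F}_q$ all of whose $(q-1)\times(q-1)$ submatrices are invertible.
   Context: A linear $(t,s,q)$-AONT over $\mathbb{F}_q$ is given by an invertible $s\times s$ matrix $M$ over $\mathbb{F}_q$ (transform $(y_1,\dots,y_s)=(x_1,\dots,x_s)M^{-1}$); $M$ defines a linear $(t,s,q)$-AONT iff every $t\times t$ submatrix of $M$ is invertible. *)

theory Defs
  imports "Jordan_Normal_Form.DL_Submatrix"
begin

end

theory Submission
  imports Defs
begin

lemma card_field_zero: "of_nat (card (UNIV::'a set)) = (0::'a::{field,finite})"
proof -
  have "(\<Sum>x\<in>(UNIV::'a set). x + 1) = (\<Sum>x\<in>UNIV. x)"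
  proof (rule sum.reindex_bij_witness[of _ "\<lambda>x. x - 1" "\<lambda>x. x + 1"]) 
  qed auto
  moreover have "(\<Sum>x\<in>(UNIV::'a set). x + 1) = (\<Sum>x\<in>UNIV. x) + of_nat (card (UNIV::'a set))"
    by (simp add: sum.distrib)
  ultimately show ?thesis by simp
qed

lemma sum_field_zero:
  assumes "card (UNIV::'a set) > 2"
  shows "(\<Sum>x\<in>(UNIV::'a::{field,finite} set). x) = 0"
proof -
  have "UNIV - {0::'a, 1} \<noteq> {}"
  proof
    assume "UNIV - {0::'a, 1} = {}"
    then have "(UNIV::'a set) \<subseteq> {0,1}" by blast
    then have "card (UNIV::'a set) \<le> card {0::'a,1}" by (intro card_mono) auto
    also have "\<dots> \<le> 2" by (simp add: card_insert_le_m1)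
    finally show False using assms by simp
  qed
  then obtain a :: 'a where a: "a \<noteq> 0" "a \<noteq> 1" by blast
  have "(\<Sum>x\<in>(UNIV::'a set). a * x) = (\<Sum>x\<in>UNIV. x)"
  proof (rule sum.reindex_bij_witness[of _ "\<lambda>x. x / a" "\<lambda>x. a * x"]) 
  qed (use a in auto)
  then have "a * (\<Sum>x\<in>(UNIV::'a set). x) = 1 * (\<Sum>x\<in>UNIV. x)"
    by (simp add: sum_distrib_left)
  then show ?thesis using a by (metis mult_cancel_right)
qed

lemma sum_inj_full:
  fixes f :: "nat \<Rightarrow> 'a::{field,finite}"
  assumes "finite S" "inj_on f S" "card S = card (UNIV::'a set)" "card (UNIV::'a set) > 2"
  shows "sum f S = 0"
proof -
  have "card (f ` S) = card (UNIV::'a set)" using assms card_image by metis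
  then have "f ` S = UNIV" by (simp add: card_eq_UNIV_imp_eq_UNIV)
  then have "sum f S = (\<Sum>x\<in>(UNIV::'a set). x)"
    using sum.reindex[OF assms(2), of id] by simp
  then show ?thesis using sum_field_zero assms(4) by simp
qed

lemma ratio_inj:
  fixes N :: "'a::field mat"
  assumes hmin: "\<And>i k a b. i < n \<Longrightarrow> k < n \<Longrightarrow> a < n \<Longrightarrow> b < n \<Longrightarrow> i \<noteq> k \<Longrightarrow> a \<noteq> b \<Longrightarrow>
      N $$ (i,a) * N $$ (k,b) - N $$ (i,b) * N $$ (k,a) \<noteq> 0"
    and "r0 < n" "r < n" "r0 \<noteq> r" "S \<subseteq> {..<n}" "\<forall>j\<in>S. N $$ (r0, j) \<noteq> 0"
  shows "inj_on (\<lambda>j. N $$ (r, j) / N $$ (r0, j)) S"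
proof
  fix j k assume j: "j \<in> S" and k: "k \<in> S" and eq: "N $$ (r, j) / N $$ (r0, j) = N $$ (r, k) / N $$ (r0, k)"
  show "j = k"
  proof (rule ccontr)
    assume "j \<noteq> k"
    have "N $$ (r0,j) * N $$ (r,k) - N $$ (r0,k) * N $$ (r,j) \<noteq> 0"
      by (rule hmin) (use assms(2-5) j k \<open>j \<noteq> k\<close> in auto)
    moreover have "N $$ (r0,j) * N $$ (r,k) - N $$ (r0,k) * N $$ (r,j) = 0"
      using eq assms(6) j k by (simp add: field_simps)
    ultimately show False by simp
  qed
qed

lemma kernel_exists:
  fixes N :: "'a::{field,finite} mat"
  assumes q: "q = card (UNIV::'a set)" "q > 2" and n: "n = q + 1"
    and N: "N \<in> carrier_mat n n"
    and hmin: "\<And>i k a b. i < n \<Longrightarrow> k < n \<Longrightarrow> a < n \<Longrightarrow> b < n \<Longrightarrow> i \<noteq> k \<Longrightarrow> a \<noteq> b \<Longrightarrow>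
      N $$ (i,a) * N $$ (k,b) - N $$ (i,b) * N $$ (k,a) \<noteq> 0"
  shows "\<exists>x \<in> carrier_vec n. x \<noteq> 0\<^sub>v n \<and> N *\<^sub>v x = 0\<^sub>v n"
proof -
  have ex0: "\<exists>c0<n. N $$ (0, c0) = 0"
  proof (rule ccontr)
    assume "\<not> ?thesis"
    then have nz: "\<forall>j\<in>{..<n}. N $$ (0, j) \<noteq> 0" by auto
    have "inj_on (\<lambda>j. N $$ (1, j) / N $$ (0, j)) {..<n}"
      by (rule ratio_inj[OF hmin]) (use nz n q in auto)
    then have "card ((\<lambda>j. N $$ (1, j) / N $$ (0, j)) ` {..<n}) = n" by (simp add: card_image)
    moreover have "card ((\<lambda>j. N $$ (1, j) / N $$ (0, j)) ` {..<n}) \<le> q"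
      using q card_mono[OF finite_UNIV subset_UNIV] by metis
    ultimately show False using n by simp
  qed
  then obtain c0 where c0: "c0 < n" "N $$ (0, c0) = 0" by blast
  have nz: "N $$ (0, j) \<noteq> 0" if "j < n" "j \<noteq> c0" for j
  proof
    assume "N $$ (0, j) = 0"
    then show False using hmin[of 0 1 c0 j] c0 that n q by auto
  qed
  define x where "x = vec n (\<lambda>j. if j = c0 then 0 else 1 / N $$ (0, j))"
  have xc: "x \<in> carrier_vec n" unfolding x_def by simp
  have "x \<noteq> 0\<^sub>v n"
  proof
    assume "x = 0\<^sub>v n"
    define j :: nat where "j = (if c0 = 0 then 1 else 0)"
    have "j < n" "j \<noteq> c0" using n q unfolding j_def by auto
    then have "x $ j = 0" using \<open>x = 0\<^sub>v n\<close> by simp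
    then show False using nz[OF \<open>j < n\<close> \<open>j \<noteq> c0\<close>] \<open>j < n\<close> \<open>j \<noteq> c0\<close> unfolding x_def by simp
  qed
  moreover have "N *\<^sub>v x = 0\<^sub>v n"
  proof (rule eq_vecI)
    show "dim_vec (N *\<^sub>v x) = dim_vec (0\<^sub>v n)" using N by simp
    fix r assume "r < dim_vec (0\<^sub>v n)"
    then have r: "r < n" by simp
    have "(N *\<^sub>v x) $ r = (\<Sum>j<n. N $$ (r, j) * x $ j)"
      using N r xc by (auto simp: scalar_prod_def lessThan_atLeast0 intro!: sum.cong)
    also have "\<dots> = (\<Sum>j\<in>{..<n} - {c0}. N $$ (r, j) / N $$ (0, j))"
    proof -
      have "(\<Sum>j<n. N $$ (r, j) * x $ j) = N $$ (r, c0) * x $ c0 + (\<Sum>j\<in>{..<n} - {c0}. N $$ (r, j) * x $ j)"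
        using c0 by (intro sum.remove) auto
      also have "\<dots> = (\<Sum>j\<in>{..<n} - {c0}. N $$ (r, j) * x $ j)" using c0 unfolding x_def by simp
      also have "\<dots> = (\<Sum>j\<in>{..<n} - {c0}. N $$ (r, j) / N $$ (0, j))"
        by (rule sum.cong) (auto simp: x_def divide_inverse)
      finally show ?thesis .
    qed
    also have "\<dots> = 0"
    proof (cases "r = 0")
      case True
      have "(\<Sum>j\<in>{..<n} - {c0}. N $$ (r, j) / N $$ (0, j)) = (\<Sum>j\<in>{..<n} - {c0}. 1)"
        by (rule sum.cong) (use True nz in auto)
      also have "\<dots> = of_nat q" using c0 n by simp
      finally show ?thesis using card_field_zero q by simp
    next
      case False
      have "inj_on (\<lambda>j. N $$ (r, j) / N $$ (0, j)) ({..<n} - {c0})"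
        by (rule ratio_inj[OF hmin]) (use nz n r False in auto)
      show ?thesis by (rule sum_inj_full[OF _ \<open>inj_on _ _\<close>]) (use c0 n q in auto)
    qed
    finally show "(N *\<^sub>v x) $ r = 0\<^sub>v n $ r" using r by simp
  qed
  ultimately show ?thesis using xc by blast
qed

lemma inv_kernel:
  fixes A :: "'a::field mat"
  assumes A: "A \<in> carrier_mat m m" and inv: "invertible_mat A"
    and v: "v \<in> carrier_vec m" and Av: "A *\<^sub>v v = 0\<^sub>v m"
  shows "v = 0\<^sub>v m"
proof -
  obtain B where AB: "A * B = 1\<^sub>m m" and BA: "B * A = 1\<^sub>m (dim_row B)"
    using inv A unfolding invertible_mat_def inverts_mat_def by auto
  have "dim_col (B * A) = m" using A by simp
  then have dr: "dim_row B = m" using BA by simp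
  have "dim_col (A * B) = m" using AB by simp
  then have dc: "dim_col B = m" by simp
  have Bc: "B \<in> carrier_mat m m" using dr dc by auto
  have "v = 1\<^sub>m m *\<^sub>v v" using v by simp
  also have "\<dots> = (B * A) *\<^sub>v v" using BA dr by simp
  also have "\<dots> = B *\<^sub>v (A *\<^sub>v v)" using Bc A v by simp
  also have "\<dots> = 0\<^sub>v m" unfolding Av using Bc by (intro eq_vecI) auto
  finally show ?thesis .
qed

lemma pick_bij:
  assumes "finite C"
  shows "bij_betw (pick C) {..<card C} C"
proof (rule bij_betw_imageI)
  show "inj_on (pick C) {..<card C}"
  proof (rule inj_onI)
    fix x y assume "x \<in> {..<card C}" "y \<in> {..<card C}" "pick C x = pick C y"
    then show "x = y" using pick_mono[of x C y] pick_mono[of y C x]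
      by (metis lessThan_iff nat_neq_iff less_irrefl)
  qed
  show "pick C ` {..<card C} = C"
  proof
    show "pick C ` {..<card C} \<subseteq> C" using pick_in_set by auto
    show "C \<subseteq> pick C ` {..<card C}"
    proof
      fix i assume i: "i \<in> C"
      have "{a\<in>C. a < i} \<subset> C" using i by auto
      then have "card {a\<in>C. a < i} < card C" using assms by (simp add: psubset_card_mono)
      then show "i \<in> pick C ` {..<card C}" using pick_card_in_set[OF i] by force
    qed
  qed
qed

lemma lm_exists:
  fixes x1 y1 x2 y2 :: "'a::field"
  assumes "x1 * y2 - y1 * x2 = 0"
  shows "\<exists>l m. (l \<noteq> 0 \<or> m \<noteq> 0) \<and> l * x1 + m * y1 = 0 \<and> l * x2 + m * y2 = 0"
proof (cases "x1 \<noteq> 0 \<or> y1 \<noteq> 0")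
  case True
  show ?thesis
    by (rule exI[of _ y1], rule exI[of _ "- x1"]) (use True assms in \<open>auto simp: algebra_simps\<close>)
next
  case False
  show ?thesis
  proof (cases "x2 \<noteq> 0 \<or> y2 \<noteq> 0")
    case True
    show ?thesis
      by (rule exI[of _ y2], rule exI[of _ "- x2"]) (use True False in \<open>auto simp: algebra_simps\<close>)
  next
    case False2: False
    show ?thesis by (rule exI[of _ 1], rule exI[of _ 0]) (use False False2 in auto)
  qed
qed

lemma minor_nz:
  fixes M N :: "'a::field mat"
  assumes M: "M \<in> carrier_mat n n" and N: "N \<in> carrier_mat n n" and MN: "M * N = 1\<^sub>m n"
    and hyp: "\<forall>I J. I \<subseteq> {..<n} \<and> J \<subseteq> {..<n} \<and> card I = n - 2 \<and> card J = n - 2 \<longrightarrow>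
                invertible_mat (submatrix M I J)"
    and ik: "i < n" "k < n" "i \<noteq> k" and ab: "a < n" "b < n" "a \<noteq> b"
  shows "N $$ (i,a) * N $$ (k,b) - N $$ (i,b) * N $$ (k,a) \<noteq> 0"
proof
  assume D: "N $$ (i,a) * N $$ (k,b) - N $$ (i,b) * N $$ (k,a) = 0"
  obtain l m where lm: "l \<noteq> 0 \<or> m \<noteq> 0" "l * N $$ (i,a) + m * N $$ (i,b) = 0"
      "l * N $$ (k,a) + m * N $$ (k,b) = 0"
    using lm_exists[OF D] by blast
  define w where "w = vec n (\<lambda>j. l * N $$ (j,a) + m * N $$ (j,b))"
  have wc: "w \<in> carrier_vec n" unfolding w_def by simp
  have mn: "(\<Sum>j<n. M $$ (r,j) * N $$ (j,c)) = (if r = c then 1 else 0)" if "r < n" "c < n" for r c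
  proof -
    have "(M * N) $$ (r,c) = (\<Sum>j<n. M $$ (r,j) * N $$ (j,c))"
      using M N that by (auto simp: scalar_prod_def lessThan_atLeast0 intro!: sum.cong)
    then show ?thesis using MN that by simp
  qed
  have Mw: "(M *\<^sub>v w) $ r = l * (if r = a then 1 else 0) + m * (if r = b then 1 else 0)" if "r < n" for r
  proof -
    have "(M *\<^sub>v w) $ r = (\<Sum>j<n. M $$ (r,j) * (l * N $$ (j,a) + m * N $$ (j,b)))"
      using M that wc by (auto simp: scalar_prod_def lessThan_atLeast0 w_def intro!: sum.cong)
    also have "\<dots> = l * (\<Sum>j<n. M $$ (r,j) * N $$ (j,a)) + m * (\<Sum>j<n. M $$ (r,j) * N $$ (j,b))"
      by (simp add: sum_distrib_left sum.distrib algebra_simps)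
    finally show ?thesis using mn that ab by simp
  qed
  have wi: "w $ i = 0" "w $ k = 0" using lm ik unfolding w_def by auto
  obtain c where c: "c < n" "w $ c \<noteq> 0"
  proof (rule ccontr)
    assume "\<not> thesis"
    then have z: "\<forall>c<n. w $ c = 0" using that by blast
    have "M *\<^sub>v w = 0\<^sub>v n"
    proof -
      have "w = 0\<^sub>v n" using z wc by (intro eq_vecI) auto
      then show ?thesis using M by (intro eq_vecI) auto
    qed
    then have "(M *\<^sub>v w) $ a = 0" "(M *\<^sub>v w) $ b = 0" using ab by auto
    then show False using Mw ab lm(1) by auto
  qed
  have cik: "c \<noteq> i" "c \<noteq> k" using c wi by auto
  define R where "R = {..<n} - {a,b}"
  define C where "C = {..<n} - {i,k}"
  define p where "p = n - 2"
  have cR: "card R = p" unfolding R_def p_def using ab by (simp add: card_Diff_subset)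
  have cC: "card C = p" unfolding C_def p_def using ik by (simp add: card_Diff_subset)
  have fC: "finite C" unfolding C_def by simp
  have RR: "{r. r < n \<and> r \<in> R} = R" "{r. r < n \<and> r \<in> C} = C" unfolding R_def C_def by auto
  define S where "S = submatrix M R C"
  have "dim_row M = n" "dim_col M = n" using M by auto
  then have Sc: "S \<in> carrier_mat p p" unfolding S_def carrier_mat_def by (simp add: dim_submatrix RR cR cC)
  have sub: "R \<subseteq> {..<n}" "C \<subseteq> {..<n}" unfolding R_def C_def by auto
  have Sinv: "invertible_mat S" unfolding S_def
    by (rule hyp[rule_format]) (use sub cR cC p_def in simp)
  define w' where "w' = vec p (\<lambda>t. w $ pick C t)"
  have w'c: "w' \<in> carrier_vec p" unfolding w'_def by simp
  have "S *\<^sub>v w' = 0\<^sub>v p"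
  proof (rule eq_vecI)
    show "dim_vec (S *\<^sub>v w') = dim_vec (0\<^sub>v p)" using Sc by simp
    fix t assume "t < dim_vec (0\<^sub>v p)"
    then have t: "t < p" by simp
    have "(S *\<^sub>v w') $ t = (\<Sum>u<p. M $$ (pick R t, pick C u) * w $ pick C u)"
      using Sc t w'c M RR cR cC
      by (auto simp: scalar_prod_def lessThan_atLeast0 S_def w'_def submatrix_index intro!: sum.cong)
    also have "\<dots> = (\<Sum>c\<in>C. M $$ (pick R t, c) * w $ c)"
      using sum.reindex_bij_betw[OF pick_bij[OF fC], of "\<lambda>c. M $$ (pick R t, c) * w $ c"] cC by simp
    also have "\<dots> = (\<Sum>c<n. M $$ (pick R t, c) * w $ c)"
      by (rule sum.mono_neutral_left) (use wi in \<open>auto simp: C_def\<close>)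
    also have "\<dots> = (M *\<^sub>v w) $ pick R t"
    proof -
      have pR: "pick R t \<in> R" using pick_in_set[of t R] t cR by simp
      then have "pick R t < n" unfolding R_def by simp
      then show ?thesis using M wc by (auto simp: scalar_prod_def lessThan_atLeast0 intro!: sum.cong)
    qed
    also have "\<dots> = 0"
    proof -
      have pR: "pick R t \<in> R" using pick_in_set[of t R] t cR by simp
      then show ?thesis using Mw unfolding R_def by auto
    qed
    finally show "(S *\<^sub>v w') $ t = 0\<^sub>v p $ t" using t by simp
  qed
  then have "w' = 0\<^sub>v p" using inv_kernel[OF Sc Sinv w'c] by simp
  moreover have "w' \<noteq> 0\<^sub>v p"
  proof -
    have "c \<in> C" using c cik unfolding C_def by auto
    then obtain u where u: "u < p" "pick C u = c" using pick_bij[OF fC] cC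
      unfolding bij_betw_def by (metis imageE lessThan_iff)
    then have "w' $ u \<noteq> 0" using c unfolding w'_def by simp
    then show ?thesis using u by auto
  qed
  ultimately show False by simp
qed

theorem corollary2p25:
  fixes q :: nat
  assumes "q = card (UNIV :: 'a::{field,finite} set)" and "q > 2"
  shows "\<not> (\<exists>M :: 'a mat. M \<in> carrier_mat (q + 1) (q + 1) \<and> invertible_mat M \<and>
            (\<forall>I J. I \<subseteq> {..<q + 1} \<and> J \<subseteq> {..<q + 1} \<and>
                   card I = q - 1 \<and> card J = q - 1 \<longrightarrow>
                   invertible_mat (submatrix M I J)))"
proof
  assume "\<exists>M :: 'a mat. M \<in> carrier_mat (q + 1) (q + 1) \<and> invertible_mat M \<and>
            (\<forall>I J. I \<subseteq> {..<q + 1} \<and> J \<subseteq> {..<q + 1} \<and>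
                   card I = q - 1 \<and> card J = q - 1 \<longrightarrow>
                   invertible_mat (submatrix M I J))"
  then obtain M :: "'a mat" where M: "M \<in> carrier_mat (q + 1) (q + 1)" and inv: "invertible_mat M"
    and hyp0: "\<forall>I J. I \<subseteq> {..<q + 1} \<and> J \<subseteq> {..<q + 1} \<and>
                   card I = q - 1 \<and> card J = q - 1 \<longrightarrow>
                   invertible_mat (submatrix M I J)" by blast
  define n where "n = q + 1"
  have Mc: "M \<in> carrier_mat n n" using M n_def by simp
  have hyp: "\<forall>I J. I \<subseteq> {..<n} \<and> J \<subseteq> {..<n} \<and> card I = n - 2 \<and> card J = n - 2 \<longrightarrow>
                invertible_mat (submatrix M I J)" using hyp0 unfolding n_def by simp
  obtain N where MN: "M * N = 1\<^sub>m n" and NM: "N * M = 1\<^sub>m (dim_row N)"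
    using inv Mc unfolding invertible_mat_def inverts_mat_def by auto
  have "dim_col (M * N) = n" using MN by simp
  then have dc: "dim_col N = n" by simp
  have "dim_col (N * M) = n" using Mc by simp
  then have dr: "dim_row N = n" using NM by simp
  have Nc: "N \<in> carrier_mat n n" using dr dc by auto
  have hmin: "N $$ (i,a) * N $$ (k,b) - N $$ (i,b) * N $$ (k,a) \<noteq> 0"
    if "i < n" "k < n" "a < n" "b < n" "i \<noteq> k" "a \<noteq> b" for i k a b
    by (rule minor_nz[OF Mc Nc MN hyp]) (use that in auto)
  obtain x where xc: "x \<in> carrier_vec n" and xnz: "x \<noteq> 0\<^sub>v n" and Nx: "N *\<^sub>v x = 0\<^sub>v n"
    using kernel_exists[OF assms n_def Nc hmin] by blast
  have "x = 1\<^sub>m n *\<^sub>v x" using xc by simp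
  also have "\<dots> = M *\<^sub>v (N *\<^sub>v x)" using MN Mc Nc xc by (metis assoc_mult_mat_vec)
  also have "\<dots> = 0\<^sub>v n" unfolding Nx using Mc by (intro eq_vecI) auto
  finally show False using xnz by simp
qed

end
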